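(* Let $(X_n)_{n\ge1}$ be real random variables for which there exist constants $C_0\ge0$, $C_1,C_2>0$, $\beta\in(0,1)$ and $\gamma\in(0,1/\beta)$ such that for all $x>0$ and all $n\ge1$, $$\Pr\big(X_n\ge C_0n^{-\beta}+x\big)\le C_1\exp(-C_2\,n\,x^\gamma).$$ Let $\delta\in(\beta,\min(\gamma^{-1},1))$ and $\alpha:=\gamma(1-\delta)/\{\gamma(1-\delta)+(1-\gamma\delta)\}$. Then there exists a constant $C_4>0$ depending only on $C_0,C_1,C_2,\beta,\gamma,\delta$ such that for every $n\ge1$ and every $y\ge1$, $$\Pr\Big(\bar X_n\ge \frac{C_0}{1-\beta}n^{-\beta}+\frac{3}{1-\delta}n^{-\delta}y\Big)\le C_4\,n^{\alpha}\exp\big\{-C_2\,n^{\alpha(1-\gamma\delta)}y^\gamma\big\},$$ where $\bar X_n:=\frac1n\sum_{i=1}^n X_i$. *)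

theory Defs
  imports "HOL-Probability.Probability"
begin

definition sample_mean :: "(nat \<Rightarrow> 'a \<Rightarrow> real) \<Rightarrow> nat \<Rightarrow> 'a \<Rightarrow> real" where
  "sample_mean X n \<omega> = (\<Sum>i=1..n. X i \<omega>) / real n"

end

theory Submission
  imports Defs
begin

lemma powr_step:
  fixes r :: real and n :: nat
  assumes "0 \<le> r" "r < 1" "n \<ge> 1"
  shows "real n powr (1-r) + (1-r) * real (Suc n) powr (-r) \<le> real (Suc n) powr (1-r)"
proof -
  have "\<exists>z. real n < z \<and> z < real n + 1 \<and> ((real n + 1) powr (1-r) - real n powr (1-r) = (real n + 1 - real n) * ((1-r) * z powr (1-r-1)))"
    apply (rule MVT2)
     apply simp
    using assms by (auto intro!: derivative_eq_intros)
  then obtain z where z: "real n < z" "z < real n + 1" "(real n + 1) powr (1-r) - real n powr (1-r) = (1-r) * z powr (-r)"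
    by auto
  have "z powr (-r) \<ge> (real n + 1) powr (-r)"
    using z assms by (intro powr_mono2') auto
  hence "(1-r) * (real n + 1) powr (-r) \<le> (1-r) * z powr (-r)" using assms by (intro mult_left_mono) auto
  then show ?thesis using z by (simp add: add.commute)
qed

lemma psum_bound:
  fixes r :: real
  assumes "0 \<le> r" "r < 1"
  shows "n \<ge> 1 \<Longrightarrow> (\<Sum>i=1..n. real i powr (-r)) \<le> real n powr (1-r) / (1-r)"
proof (induction n rule: dec_induct)
  case base
  then show ?case using assms by (simp add: field_simps)
next
  case (step n)
  have "(\<Sum>i=1..Suc n. real i powr (-r)) = (\<Sum>i=1..n. real i powr (-r)) + real (Suc n) powr (-r)"
    by simp
  also have "\<dots> \<le> real n powr (1-r) / (1-r) + real (Suc n) powr (-r)" using step by simp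
  also have "\<dots> \<le> real (Suc n) powr (1-r) / (1-r)"
  proof -
    have h: "real n powr (1-r) + (1-r) * real (Suc n) powr (-r) \<le> real (Suc n) powr (1-r)"
      using powr_step[OF assms step(1)] .
    have "real (Suc n) powr (-r) \<le> (real (Suc n) powr (1-r) - real n powr (1-r)) / (1-r)"
      using h assms by (simp add: pos_le_divide_eq mult.commute)
    then show ?thesis by (simp add: diff_divide_distrib)
  qed
  finally show ?case .
qed

lemma inv_sq_sum: "(\<Sum>i=1..n. 1 / real i ^ 2) \<le> 2 - 1 / real (max n 1)"
proof (induction n)
  case 0 then show ?case by simp
next
  case (Suc n)
  show ?case
  proof (cases "n = 0")
    case True then show ?thesis by simp
  next
    case False
    have "(\<Sum>i=1..Suc n. 1 / real i ^ 2) \<le> 2 - 1 / real n + 1 / real (Suc n)^2"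
      using Suc False by simp
    also have "\<dots> \<le> 2 - 1 / real (Suc n)"
    proof -
      have "1 / real (Suc n)^2 \<le> 1 / (real n * real (Suc n))"
        using False by (intro divide_left_mono) (auto simp: power2_eq_square)
      also have "\<dots> = 1 / real n - 1 / real (Suc n)" using False by (simp add: field_simps)
      finally show ?thesis by simp
    qed
    finally show ?thesis by simp
  qed
qed

lemma exp_poly_bound:
  fixes c p t :: real and k :: nat
  assumes "c > 0" "t > 0" "k \<ge> 1"
  shows "exp (-c * t) \<le> (real k / c)^k / t^k"
proof -
  have "exp (c*t / k) \<ge> 1 + c*t/k" by (rule exp_ge_add_one_self)
  hence "exp (c*t/k) \<ge> c*t/k" by linarith
  hence "exp (c*t/k)^k \<ge> (c*t/k)^k" using assms by (intro power_mono) auto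
  moreover have "exp (c*t/k)^k = exp (c*t)" using assms by (simp add: exp_of_nat_mult[symmetric])
  ultimately have A: "exp (c*t) \<ge> (c*t/k)^k" by simp
  show ?thesis
  proof (cases "t = 0")
    case True then show ?thesis using assms by simp
  next
    case False
    hence "(c*t/k)^k > 0" using assms by simp
    then have "1 / exp (c*t) \<le> 1 / (c*t/k)^k" using A by (intro divide_left_mono) auto
    then have "exp (-c*t) \<le> 1 / (c*t/k)^k" by (simp add: exp_minus inverse_eq_divide)
    also have "\<dots> = (real k / c)^k / t^k" by (simp add: field_simps power_divide power_mult_distrib)
    finally show ?thesis .
  qed
qed


lemma core:
  fixes C0 C1 C2 \<beta> \<gamma> \<delta> \<alpha> y :: real and n :: nat and M :: "'a measure" and X :: "nat \<Rightarrow> 'a \<Rightarrow> real"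
  assumes "C0 \<ge> 0" and "C1 > 0" and "C2 > 0"
    and "0 < \<beta>" and "\<beta> < 1"
    and "0 < \<gamma>" and "\<gamma> * \<delta> < 1"
    and "0 < \<delta>" and "\<delta> < 1"
    and adef: "\<alpha> = \<gamma> * (1 - \<delta>) / (\<gamma> * (1 - \<delta>) + (1 - \<gamma> * \<delta>))"
    and M: "prob_space M" and Xm: "\<forall>i. X i \<in> borel_measurable M"
    and tail: "\<forall>n \<ge> 1. \<forall>x > 0.
              measure M {\<omega> \<in> space M. X n \<omega> \<ge> C0 * real n powr (-\<beta>) + x}
                \<le> C1 * exp (- C2 * real n * x powr \<gamma>)"
    and n: "n \<ge> 1" and y: "y \<ge> 1"
    and kdef: "k = nat \<lceil>2 / (1 - \<gamma> * \<delta>)\<rceil>"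
    and cdef: "c = C2 * (2 powr \<gamma> - 1)"
  shows "measure M {\<omega> \<in> space M.
                 sample_mean X n \<omega> \<ge> C0 / (1 - \<beta>) * real n powr (-\<beta>)
                                     + 3 / (1 - \<delta>) * real n powr (-\<delta>) * y}
                \<le> C1 * (1 + 2 * (real k / c)^k) * real n powr \<alpha> * exp (- C2 * real n powr (\<alpha> * (1 - \<gamma> * \<delta>)) * y powr \<gamma>)"
proof -
  interpret prob_space M by (rule M)
  have prm: "C0 \<ge> 0" "C1 > 0" "C2 > 0" "0 < \<beta>" "\<beta> < 1" "0 < \<gamma>" "\<gamma> * \<delta> < 1" "0 < \<delta>" "\<delta> < 1"
    using assms(1-9) by auto
  define p where "p = 1 - \<gamma> * \<delta>"
  define q where "q = 1 - \<delta>"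
  have p0: "p > 0" "p \<le> 1" using prm by (auto simp: p_def)
  have q0: "q > 0" using prm by (simp add: q_def)
  have gq: "\<gamma> * q > 0" using q0 prm by simp
  have aeq: "\<alpha> = \<gamma> * q / (\<gamma> * q + p)" by (simp add: adef p_def q_def)
  have a0: "\<alpha> > 0" "\<alpha> < 1" using gq p0 by (simp_all add: aeq divide_less_eq)
  have ak1: "\<alpha> * (\<gamma> * q + p) = \<gamma> * q" using gq p0 by (simp add: aeq)
  have akey: "\<alpha> * p / \<gamma> + \<alpha> * q = q"
  proof -
    have "\<alpha> * p / \<gamma> + \<alpha> * q = \<alpha> * (\<gamma> * q + p) / \<gamma>" using \<open>0 < \<gamma>\<close> by (simp add: field_simps)
    also have "\<dots> = q" using ak1 \<open>0 < \<gamma>\<close> by simp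
    finally show ?thesis .
  qed
  define T where "T = real n powr (\<alpha> * p)"
  define s where "s = real n powr (\<alpha> * p / \<gamma>)"
  define m where "m = nat \<lfloor>real n powr \<alpha>\<rfloor>"
  define E where "E = exp (- C2 * T * y powr \<gamma>)"
  define x where "x i = (if i \<le> m then s else 2) * real i powr (-\<delta>) * y" for i :: nat
  define A where "A i = {\<omega> \<in> space M. X i \<omega> \<ge> C0 * real i powr (-\<beta>) + x i}" for i
  define K where "K = 2 * (real k / c)^k"
  have n1: "real n powr \<alpha> \<ge> 1" using n a0 by (simp add: ge_one_powr_ge_zero)
  have m1: "m \<ge> 1" using n1 by (simp add: m_def le_nat_iff)
  have mle: "real m \<le> real n powr \<alpha>" using n1 by (simp add: m_def)
  have mlt: "real n powr \<alpha> < real m + 1" using n1 by (simp add: m_def)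
  have sT: "s powr \<gamma> = T" using \<open>0 < \<gamma>\<close> by (simp add: s_def T_def powr_powr)
  have s1: "s \<ge> 1" using n p0 a0 prm by (simp add: s_def ge_one_powr_ge_zero)
  have T0: "T \<ge> 0" by (simp add: T_def)
  have c0: "c > 0"
  proof -
    have "2 powr 0 < (2::real) powr \<gamma>" using prm by simp
    then show ?thesis using prm by (simp add: cdef)
  qed
  have xpos: "x i > 0" if "i \<ge> 1" for i using that s1 y by (simp add: x_def)
  have incl: "{\<omega> \<in> space M.
                 sample_mean X n \<omega> \<ge> C0 / (1 - \<beta>) * real n powr (-\<beta>)
                                     + 3 / (1 - \<delta>) * real n powr (-\<delta>) * y} \<subseteq> (\<Union>i\<in>{1..n}. A i)"
  proof
    fix \<omega> assume w: "\<omega> \<in> {\<omega> \<in> space M.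
                 sample_mean X n \<omega> \<ge> C0 / (1 - \<beta>) * real n powr (-\<beta>)
                                     + 3 / (1 - \<delta>) * real n powr (-\<delta>) * y}"
    show "\<omega> \<in> (\<Union>i\<in>{1..n}. A i)"
    proof (rule ccontr)
      assume "\<omega> \<notin> (\<Union>i\<in>{1..n}. A i)"
      hence lt: "\<forall>i\<in>{1..n}. X i \<omega> < C0 * real i powr (-\<beta>) + x i" using w by (auto simp: A_def not_le)
      have sumx: "(\<Sum>i=1..n. x i) \<le> 3 * real n powr q * y / q"
      proof -
        have "(\<Sum>i=1..n. x i) \<le> (\<Sum>i=1..n. s * y * (if i \<in> {..m} then real i powr (-\<delta>) else 0) + 2 * y * real i powr (-\<delta>))"
          using s1 y by (intro sum_mono) (auto simp: x_def)
        also have "\<dots> = s * y * (\<Sum>i=1..n. (if i \<in> {..m} then real i powr (-\<delta>) else 0)) + 2 * y * (\<Sum>i=1..n. real i powr (-\<delta>))"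
          by (simp add: sum.distrib sum_distrib_left)
        also have "\<dots> = s * y * (\<Sum>i\<in>{1..n} \<inter> {..m}. real i powr (-\<delta>)) + 2 * y * (\<Sum>i=1..n. real i powr (-\<delta>))"
          by (subst sum.inter_restrict) auto
        also have "\<dots> \<le> s * y * (\<Sum>i=1..m. real i powr (-\<delta>)) + 2 * y * (real n powr q / q)"
        proof (intro add_mono mult_left_mono)
          show "(\<Sum>i\<in>{1..n} \<inter> {..m}. real i powr (-\<delta>)) \<le> (\<Sum>i=1..m. real i powr (-\<delta>))"
            by (intro sum_mono2) auto
          show "(\<Sum>i=1..n. real i powr (-\<delta>)) \<le> real n powr q / q"
            using psum_bound[of \<delta> n] prm n by (simp add: q_def)
        qed (use s1 y in auto)
        also have "\<dots> \<le> s * y * (real m powr q / q) + 2 * y * (real n powr q / q)"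
          using psum_bound[of \<delta> m] prm m1 s1 y by (intro add_mono mult_left_mono) (auto simp: q_def)
        also have "real m powr q \<le> real n powr (\<alpha> * q)"
        proof -
          have "real m powr q \<le> (real n powr \<alpha>) powr q" using mle q0 by (intro powr_mono2) auto
          then show ?thesis by (simp add: powr_powr)
        qed
        hence "s * y * (real m powr q / q) \<le> s * y * (real n powr (\<alpha> * q) / q)"
          using s1 y q0 by (intro mult_left_mono divide_right_mono) auto
        also have "s * y * (real n powr (\<alpha> * q) / q) = y * real n powr q / q"
          unfolding s_def using akey by (simp add: powr_add[symmetric])
        finally show ?thesis by (simp add: mult_ac)
      qed
      have "(\<Sum>i=1..n. X i \<omega>) < (\<Sum>i=1..n. C0 * real i powr (-\<beta>) + x i)"
        using lt n by (intro sum_strict_mono) auto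
      also have "\<dots> = C0 * (\<Sum>i=1..n. real i powr (-\<beta>)) + (\<Sum>i=1..n. x i)"
        by (simp add: sum.distrib sum_distrib_left)
      also have "\<dots> \<le> C0 * (real n powr (1-\<beta>)/(1-\<beta>)) + 3 * real n powr q * y / q"
        using psum_bound[of \<beta> n] prm n sumx by (intro add_mono mult_left_mono) auto
      finally have S: "(\<Sum>i=1..n. X i \<omega>) < C0 * (real n powr (1-\<beta>)/(1-\<beta>)) + 3 * real n powr q * y / q" .
      have e1: "real n powr (1-\<beta>) = real n * real n powr (-\<beta>)"
        using n by (simp add: powr_diff powr_minus divide_inverse)
      have e2: "real n powr q = real n * real n powr (-\<delta>)"
        using n by (simp add: powr_diff powr_minus divide_inverse q_def)
      have "sample_mean X n \<omega> < (C0 * (real n powr (1-\<beta>)/(1-\<beta>)) + 3 * real n powr q * y / q) / real n"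
        using S n by (simp add: sample_mean_def divide_strict_right_mono)
      also have "\<dots> = (C0 * (real n * real n powr (-\<beta>)/(1-\<beta>)) + 3 * (real n * real n powr (-\<delta>)) * y / q) / real n"
        by (simp only: e1 e2)
      also have "\<dots> = C0 / (1 - \<beta>) * real n powr (-\<beta>) + 3 / q * real n powr (-\<delta>) * y"
      proof -
        have "real n > 0" using n by simp
        then show ?thesis by (simp add: add_divide_distrib)
      qed
      also have "\<dots> = C0 / (1 - \<beta>) * real n powr (-\<beta>) + 3 / (1 - \<delta>) * real n powr (-\<delta>) * y"
        by (simp add: q_def)
      finally show False using w by simp
    qed
  qed
  have Xmi[measurable]: "X i \<in> borel_measurable M" for i using Xm by simp
  have Ameas: "A i \<in> sets M" for i
    unfolding A_def by measurable
  have bound_i: "measure M (A i) \<le> C1 * E * (if i \<le> m then 1 else exp (- c * real i powr p))"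
    if "i \<in> {1..n}" for i
  proof -
    have i1: "i \<ge> 1" "i \<le> n" using that by auto
    have mA: "measure M (A i) \<le> C1 * exp (- C2 * real i * x i powr \<gamma>)"
      using tail i1 xpos[OF i1(1)] unfolding A_def by blast
    have xg1: "x i powr \<gamma> = (if i \<le> m then s else 2) powr \<gamma> * real i powr (-\<delta> * \<gamma>) * y powr \<gamma>"
      using s1 y by (simp add: x_def powr_mult powr_powr)
    have xg: "real i * x i powr \<gamma> = (if i \<le> m then s else 2) powr \<gamma> * real i powr p * y powr \<gamma>"
    proof -
      have "real i * real i powr (-\<delta> * \<gamma>) = real i powr p"
        using i1 by (simp add: p_def powr_diff powr_minus divide_inverse mult.commute)
      then show ?thesis unfolding xg1 by (simp add: algebra_simps)
    qed
    have bnd: "C1 * exp (- C2 * ((if i \<le> m then s else 2) powr \<gamma> * real i powr p * y powr \<gamma>))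
        \<le> C1 * E * (if i \<le> m then 1 else exp (- c * real i powr p))"
    proof (cases "i \<le> m")
      case True
      have "real i powr p \<ge> 1" using i1 p0 by (simp add: ge_one_powr_ge_zero)
      hence "T * y powr \<gamma> * 1 \<le> T * y powr \<gamma> * real i powr p"
        using T0 by (intro mult_left_mono) auto
      hence "T * y powr \<gamma> \<le> T * real i powr p * y powr \<gamma>" by (simp add: mult_ac)
      hence "C2 * (T * y powr \<gamma>) \<le> C2 * (T * real i powr p * y powr \<gamma>)"
        using prm by (intro mult_left_mono) auto
      then show ?thesis using True \<open>C1 > 0\<close> sT by (simp add: E_def)
    next
      case False
      have ig: "real i > real n powr \<alpha>" using False mlt by linarith
      have "real i powr p \<ge> T"
      proof -
        have "(real n powr \<alpha>) powr p \<le> real i powr p" using ig p0 by (intro powr_mono2) auto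
        then show ?thesis by (simp add: T_def powr_powr)
      qed
      moreover have "y powr \<gamma> \<ge> 1" using y prm by (simp add: ge_one_powr_ge_zero)
      moreover have "2 powr \<gamma> = 1 + c / C2" using prm by (simp add: cdef field_simps)
      ultimately have "C2 * T * y powr \<gamma> + c * real i powr p \<le> C2 * (2 powr \<gamma> * real i powr p * y powr \<gamma>)"
      proof -
        assume iT: "real i powr p \<ge> T" and Y: "y powr \<gamma> \<ge> 1" and two: "2 powr \<gamma> = 1 + c / C2"
        have a: "C2 * T * y powr \<gamma> \<le> C2 * real i powr p * y powr \<gamma>"
          using iT Y prm by (intro mult_right_mono mult_left_mono) auto
        have b: "c * real i powr p \<le> c * real i powr p * y powr \<gamma>"
        proof -
          have "c * real i powr p * 1 \<le> c * real i powr p * y powr \<gamma>"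
            using Y c0 by (intro mult_left_mono) auto
          then show ?thesis by simp
        qed
        have "C2 * (2 powr \<gamma> * real i powr p * y powr \<gamma>) = C2 * real i powr p * y powr \<gamma> + c * real i powr p * y powr \<gamma>"
          using prm by (simp add: two field_simps)
        then show ?thesis using a b by linarith
      qed
      then have "exp (- C2 * (2 powr \<gamma> * real i powr p * y powr \<gamma>)) \<le> exp (-(C2 * T * y powr \<gamma>) + - (c * real i powr p))"
        by simp
      also have "\<dots> = E * exp (- c * real i powr p)" unfolding exp_add E_def by simp
      finally have ex: "exp (- C2 * (2 powr \<gamma> * real i powr p * y powr \<gamma>)) \<le> E * exp (- c * real i powr p)" .
      show ?thesis using mult_left_mono[OF ex, of C1] False prm by (simp add: mult.assoc)
    qed
    have eqE: "- C2 * real i * x i powr \<gamma> = - C2 * ((if i \<le> m then s else 2) powr \<gamma> * real i powr p * y powr \<gamma>)"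
      using xg by (simp add: mult.assoc)
    then have "measure M (A i) \<le> C1 * exp (- C2 * ((if i \<le> m then s else 2) powr \<gamma> * real i powr p * y powr \<gamma>))"
      by (subst eqE[symmetric]) (rule mA)
    then show ?thesis using bnd by (rule order_trans)
  qed
  have sumexp: "(\<Sum>i=1..n. exp (- c * real i powr p)) \<le> K"
  proof -
    have kge: "real k \<ge> 2 / p" unfolding kdef p_def[symmetric] by (rule real_nat_ceiling_ge)
    have "2 / p > 0" using p0 by simp
    hence "real k > 0" using kge by linarith
    hence k1: "k \<ge> 1" by simp
    have pk: "real k * p \<ge> 2" using kge p0 by (simp add: divide_le_eq)
    have tm: "exp (- c * real i powr p) \<le> (real k / c)^k * (1 / real i ^ 2)" if "i \<in> {1..n}" for i
    proof -
      have i1: "real i \<ge> 1" using that by auto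
      have "exp (- c * real i powr p) \<le> (real k / c)^k / (real i powr p)^k"
        using exp_poly_bound[OF c0 _ k1] i1 by simp
      also have "(real i powr p)^k = real i powr (real k * p)" using i1 by (simp add: powr_power)
      also have "real i powr (real k * p) \<ge> real i powr 2" using pk i1 by (intro powr_mono) auto
      hence "(real k / c)^k / real i powr (real k * p) \<le> (real k / c)^k / real i powr 2"
        using i1 c0 by (intro divide_left_mono) auto
      also have "real i powr 2 = real i ^ 2" using i1 by simp
      finally show ?thesis by simp
    qed
    have "(\<Sum>i=1..n. exp (- c * real i powr p)) \<le> (\<Sum>i=1..n. (real k / c)^k * (1 / real i ^ 2))"
      by (intro sum_mono tm)
    also have "\<dots> = (real k / c)^k * (\<Sum>i=1..n. 1 / real i ^ 2)" by (simp add: sum_distrib_left)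
    also have "\<dots> \<le> (real k / c)^k * 2"
    proof (intro mult_left_mono)
      have "(\<Sum>i=1..n. 1 / real i ^ 2) \<le> 2 - 1 / real (max n 1)" by (rule inv_sq_sum)
      also have "\<dots> \<le> 2" by simp
      finally show "(\<Sum>i=1..n. 1 / real i ^ 2) \<le> 2" .
    qed (use c0 in simp)
    finally show ?thesis by (simp add: K_def mult.commute)
  qed
  have "measure M {\<omega> \<in> space M.
                 sample_mean X n \<omega> \<ge> C0 / (1 - \<beta>) * real n powr (-\<beta>)
                                     + 3 / (1 - \<delta>) * real n powr (-\<delta>) * y} \<le> measure M (\<Union>i\<in>{1..n}. A i)"
    using incl Ameas by (intro finite_measure_mono) auto
  also have "\<dots> \<le> (\<Sum>i\<in>{1..n}. measure M (A i))"
    using Ameas by (intro finite_measure_subadditive_finite) auto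
  also have "\<dots> \<le> (\<Sum>i\<in>{1..n}. C1 * E * (if i \<le> m then 1 else exp (- c * real i powr p)))"
    by (intro sum_mono bound_i)
  also have "\<dots> \<le> C1 * E * (real n powr \<alpha> * (1 + K))"
  proof -
    have K0: "K \<ge> 0" using c0 by (simp add: K_def)
    have E0: "C1 * E \<ge> 0" using prm by (simp add: E_def)
    have "(\<Sum>i\<in>{1..n}. (if i \<le> m then 1 else exp (- c * real i powr p)))
        \<le> (\<Sum>i\<in>{1..n}. (if i \<in> {..m} then 1 else 0) + exp (- c * real i powr p))"
      by (intro sum_mono) auto
    also have "\<dots> = (\<Sum>i\<in>{1..n}. (if i \<in> {..m} then 1 else 0)) + (\<Sum>i=1..n. exp (- c * real i powr p))"
      by (simp add: sum.distrib)
    also have "(\<Sum>i\<in>{1..n}. (if i \<in> {..m} then 1 else 0)) = (\<Sum>i\<in>{1..n} \<inter> {..m}. (1::real))"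
      by (subst sum.inter_restrict) auto
    also have "\<dots> = real (card ({1..n} \<inter> {..m}))" by simp
    also have "card ({1..n} \<inter> {..m}) \<le> card {1..m}" by (intro card_mono) auto
    hence "real (card ({1..n} \<inter> {..m})) \<le> real m" by simp
    hence "real (card ({1..n} \<inter> {..m})) + (\<Sum>i=1..n. exp (- c * real i powr p)) \<le> real n powr \<alpha> + K"
      using sumexp mle by linarith
    also have "\<dots> \<le> real n powr \<alpha> * (1 + K)"
    proof -
      have "K * 1 \<le> K * real n powr \<alpha>" using n1 K0 by (intro mult_left_mono) auto
      then show ?thesis by (simp add: algebra_simps)
    qed
    finally have "(\<Sum>i\<in>{1..n}. (if i \<le> m then 1 else exp (- c * real i powr p))) \<le> real n powr \<alpha> * (1 + K)" .
    then have "C1 * E * (\<Sum>i\<in>{1..n}. (if i \<le> m then 1 else exp (- c * real i powr p))) \<le> C1 * E * (real n powr \<alpha> * (1 + K))"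
      using E0 by (rule mult_left_mono)
    then show ?thesis by (simp add: sum_distrib_left)
  qed
  finally show ?thesis
    unfolding K_def E_def T_def p_def by (simp add: algebra_simps)
qed

theorem proposition4:
  fixes C0 C1 C2 \<beta> \<gamma> \<delta> :: real
  assumes "C0 \<ge> 0" and "C1 > 0" and "C2 > 0"
    and "0 < \<beta>" and "\<beta> < 1"
    and "0 < \<gamma>" and "\<gamma> < 1 / \<beta>"
    and "\<beta> < \<delta>" and "\<delta> < min (1 / \<gamma>) 1"
  defines "\<alpha> \<equiv> \<gamma> * (1 - \<delta>) / (\<gamma> * (1 - \<delta>) + (1 - \<gamma> * \<delta>))"
  shows "\<exists>C4 > 0. \<forall>(M :: 'a measure) (X :: nat \<Rightarrow> 'a \<Rightarrow> real).
           prob_space M \<and> (\<forall>i. X i \<in> borel_measurable M) \<and>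
           (\<forall>n \<ge> 1. \<forall>x > 0.
              measure M {\<omega> \<in> space M. X n \<omega> \<ge> C0 * real n powr (-\<beta>) + x}
                \<le> C1 * exp (- C2 * real n * x powr \<gamma>))
           \<longrightarrow> (\<forall>n \<ge> 1. \<forall>y \<ge> 1.
              measure M {\<omega> \<in> space M.
                 sample_mean X n \<omega> \<ge> C0 / (1 - \<beta>) * real n powr (-\<beta>)
                                     + 3 / (1 - \<delta>) * real n powr (-\<delta>) * y}
                \<le> C4 * real n powr \<alpha> * exp (- C2 * real n powr (\<alpha> * (1 - \<gamma> * \<delta>)) * y powr \<gamma>))"
proof -
  define k where "k = nat \<lceil>2 / (1 - \<gamma> * \<delta>)\<rceil>"
  define c where "c = C2 * (2 powr \<gamma> - 1)"
  have c0: "c > 0"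
  proof -
    have "2 powr 0 < (2::real) powr \<gamma>" using assms by simp
    then show ?thesis using assms by (simp add: c_def)
  qed
  have d0: "0 < \<delta>" "\<delta> < 1" using assms by auto
  have gd: "\<gamma> * \<delta> < 1"
  proof -
    have "\<delta> < 1 / \<gamma>" using assms by simp
    then show ?thesis using assms by (simp add: field_simps)
  qed
  have pos: "C1 * (1 + 2 * (real k / c)^k) > 0"
    using assms c0 by (intro mult_pos_pos) (auto intro: add_pos_nonneg)
  show ?thesis
    apply (rule exI[of _ "C1 * (1 + 2 * (real k / c)^k)"])
    apply (intro conjI pos allI impI)
    apply (rule core[where k = k and c = c])
    using assms d0 gd by (auto simp: k_def c_def \<alpha>_def)
qed

end
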